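(* Let $\alpha>1$, $\delta\in(0,\alpha-1)$, $\tau\in(0,\alpha-1-\delta]$, $d\in\mathbb N$, $1\ge\gamma_1\ge\dots\ge\gamma_d>0$, and $g\in\mathcal A_{\alpha,\boldsymbol\gamma,d}$. Let $\boldsymbol x_1,\dots,\boldsymbol x_N\in[0,1]^d$, $c_1,\dots,c_N\in\mathbb R$. Let $L$ be a prime and $\mathcal Z=\{\boldsymbol z_0,\dots,\boldsymbol z_{L-1}\}$ a rank-1 lattice point set of size $L$ satisfying $e(H_{\beta,\boldsymbol\gamma,d},\mathcal Z)\le C_{\boldsymbol\gamma,d}(\beta,\tau')L^{-\beta+\tau'}$ for all $\tau'\in(0,\beta-\frac12]$, where $\beta=\alpha-\frac12-\delta$. Then for $m\in\mathbb N$, with $K=Q^\alpha_{m,\boldsymbol\gamma,d}$, $$\Big|\frac1N\sum_{n=1}^Nc_ng(\boldsymbol x_n)-\frac1L\sum_{\ell=0}^{L-1}g(\boldsymbol z_\ell)\phi_K(\boldsymbol z_\ell)\Big|\le\mathrm{err}_1(g,\mathcal C)+\mathrm{err}_2(g,\mathcal C)\le\|g\|_{\mathcal A_{\alpha,\boldsymbol\gamma,d}}\Big[\frac1{\sqrt{2^{m-d+1}}}+\frac{\sqrt{2^m}}{L^{\alpha-\frac12-\delta-\tau}}c_{\alpha,\boldsymbol\gamma,d}\,\zeta_{\delta,d}\,C_{\boldsymbol\gamma,d}\big(\alpha-\tfrac12-\delta,\tau\big)\Big]\overline\mu_N.$$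
   Context: $r_\beta(\gamma,h)=\max(|h|^{2\beta}/\gamma,1)$, $r_\beta(\boldsymbol\gamma,\boldsymbol k)=\prod_jr_\beta(\gamma_j,k_j)$; $\omega_{\boldsymbol k}(\boldsymbol x)=\exp(2\pi i\,\boldsymbol k\cdot\boldsymbol x)$, $\widehat f_{\boldsymbol k}=\int_{[0,1]^d}f\,\overline{\omega_{\boldsymbol k}}$. $\mathcal A_{\alpha,\boldsymbol\gamma,d}=\{f\in L_1([0,1]^d):\|f\|_{\mathcal A_{\alpha,\boldsymbol\gamma,d}}=\sum_{\boldsymbol k}\sqrt{r_\alpha(\boldsymbol\gamma,\boldsymbol k)}|\widehat f_{\boldsymbol k}|<\infty\}$; $H_{\beta,\boldsymbol\gamma,d}=\{f\in L_2:\|f\|^2_{H_{\beta,\boldsymbol\gamma,d}}=\sum_{\boldsymbol k}r_\beta(\boldsymbol\gamma,\boldsymbol k)|\widehat f_{\boldsymbol k}|^2<\infty\}$. Weighted step hyperbolic cross: $Q^\alpha_{m,\boldsymbol\gamma,d}=\bigcup_{\boldsymbol t\in\mathbb N_0^d,\|\boldsymbol t\|_1=m}\{\boldsymbol k\in\mathbb Z^d:r_\alpha(\gamma_j,k_j)\le2^{t_j}\ \forall j\}$. $\phi_K(\boldsymbol x)=\sum_{\boldsymbol k\in K}\check\phi_{\boldsymbol k}\overline{\omega_{\boldsymbol k}(\boldsymbol x)}$, $\check\phi_{\boldsymbol k}=\frac1N\sum_nc_n\omega_{\boldsymbol k}(\boldsymbol x_n)$; $\mathcal C=(c_n)$; $\mathrm{err}_1(g,\mathcal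 C)=|\frac1N\sum_nc_ng(\boldsymbol x_n)-\int g\phi_K|$, $\mathrm{err}_2(g,\mathcal C)=|\int g\phi_K-\frac1L\sum_\ell(g\phi_K)(\boldsymbol z_\ell)|$. Rank-1 lattice: $\{\boldsymbol z_\ell=(\ell\mathfrak g/L)\bmod1\}$, $\mathfrak g\in\{1,\dots,L-1\}^d$. $e(H_{\beta,\boldsymbol\gamma,d},\mathcal Z)=\sup_{\|f\|\le1}|\int f-\frac1L\sum_\ell f(\boldsymbol z_\ell)|$. $C_{\boldsymbol\gamma,d}(\beta,\tau)=2^{\beta-\tau}\prod_j[1+2\gamma_j^{1/(2(\beta-\tau))}\zeta(\frac\beta{\beta-\tau})]^{\beta-\tau}$; $\overline\mu_N=\frac1N\sum_n|c_n|$; $c_{\alpha,\boldsymbol\gamma,d}=\sqrt{\prod_j\max(1,2^{2\alpha}\gamma_j)}$; $\zeta_{\delta,d}=[1+2\zeta(1+2\delta)]^{d/2}$; $\zeta$ Riemann zeta. *)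

theory Defs
  imports "HOL-Analysis.Analysis" "HOL-Computational_Algebra.Primes"
begin

text \<open>Dimension d is CARD('n); coordinates j are indexed by the (linearly ordered) finite type 'n.\<close>

definition unit_cube :: "(real^'n::finite) set" where
  "unit_cube = cbox 0 One"

definition rzeta :: "real \<Rightarrow> real" where
  "rzeta s = (\<Sum>n. 1 / real (Suc n) powr s)"

definition rfun :: "real \<Rightarrow> real \<Rightarrow> int \<Rightarrow> real" where
  "rfun \<beta> \<gamma> h = max (\<bar>real_of_int h\<bar> powr (2 * \<beta>) / \<gamma>) 1"

definition rvec :: "real \<Rightarrow> ('n::finite \<Rightarrow> real) \<Rightarrow> int^'n \<Rightarrow> real" where
  "rvec \<beta> \<gamma> k = (\<Prod>j\<in>UNIV. rfun \<beta> (\<gamma> j) (k $ j))"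

definition omega :: "int^'n::finite \<Rightarrow> real^'n \<Rightarrow> complex" where
  "omega k x = exp (2 * complex_of_real pi * \<i> *
      complex_of_real (\<Sum>j\<in>UNIV. real_of_int (k $ j) * x $ j))"

definition fourier_coeff :: "(real^'n::finite \<Rightarrow> complex) \<Rightarrow> int^'n \<Rightarrow> complex" where
  "fourier_coeff f k = (LINT x : unit_cube | lborel. f x * cnj (omega k x))"

text \<open>The (continuous) representative: f equals its Fourier series pointwise on the cube.\<close>
definition fourier_rep :: "(real^'n::finite \<Rightarrow> complex) \<Rightarrow> bool" where
  "fourier_rep f \<longleftrightarrow> (\<forall>x\<in>unit_cube. f x = (\<Sum>\<^sub>\<infinity>k. fourier_coeff f k * omega k x))"

definition in_A :: "real \<Rightarrow> ('n::finite \<Rightarrow> real) \<Rightarrow> (real^'n \<Rightarrow> complex) \<Rightarrow> bool" where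
  "in_A \<alpha> \<gamma> f \<longleftrightarrow> set_integrable lborel unit_cube f \<and>
     (\<lambda>k. sqrt (rvec \<alpha> \<gamma> k) * cmod (fourier_coeff f k)) summable_on UNIV"

definition A_norm :: "real \<Rightarrow> ('n::finite \<Rightarrow> real) \<Rightarrow> (real^'n \<Rightarrow> complex) \<Rightarrow> real" where
  "A_norm \<alpha> \<gamma> f = (\<Sum>\<^sub>\<infinity>k. sqrt (rvec \<alpha> \<gamma> k) * cmod (fourier_coeff f k))"

definition in_H :: "real \<Rightarrow> ('n::finite \<Rightarrow> real) \<Rightarrow> (real^'n \<Rightarrow> complex) \<Rightarrow> bool" where
  "in_H \<beta> \<gamma> f \<longleftrightarrow> set_borel_measurable lborel unit_cube f \<and>
     set_integrable lborel unit_cube (\<lambda>x. (cmod (f x))^2) \<and>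
     (\<lambda>k. rvec \<beta> \<gamma> k * (cmod (fourier_coeff f k))^2) summable_on UNIV"

definition H_norm :: "real \<Rightarrow> ('n::finite \<Rightarrow> real) \<Rightarrow> (real^'n \<Rightarrow> complex) \<Rightarrow> real" where
  "H_norm \<beta> \<gamma> f = sqrt (\<Sum>\<^sub>\<infinity>k. rvec \<beta> \<gamma> k * (cmod (fourier_coeff f k))^2)"

definition wce :: "real \<Rightarrow> ('n::finite \<Rightarrow> real) \<Rightarrow> (nat \<Rightarrow> real^'n) \<Rightarrow> nat \<Rightarrow> ereal" where
  "wce \<beta> \<gamma> z L = (SUP f \<in> {f. in_H \<beta> \<gamma> f \<and> fourier_rep f \<and> H_norm \<beta> \<gamma> f \<le> 1}.
      ereal (cmod ((LINT x : unit_cube | lborel. f x) - (1 / of_nat L) * (\<Sum>l<L. f (z l)))))"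

definition lattice_pt :: "nat \<Rightarrow> nat^'n::finite \<Rightarrow> nat \<Rightarrow> real^'n" where
  "lattice_pt L gen l = (\<chi> j. frac (real l * real (gen $ j) / real L))"

definition Ccon :: "('n::finite \<Rightarrow> real) \<Rightarrow> real \<Rightarrow> real \<Rightarrow> real" where
  "Ccon \<gamma> \<beta> \<tau> = 2 powr (\<beta> - \<tau>) *
     (\<Prod>j\<in>UNIV. (1 + 2 * \<gamma> j powr (1 / (2 * (\<beta> - \<tau>))) * rzeta (\<beta> / (\<beta> - \<tau>))) powr (\<beta> - \<tau>))"

definition hypcross :: "real \<Rightarrow> ('n::finite \<Rightarrow> real) \<Rightarrow> nat \<Rightarrow> (int^'n) set" where
  "hypcross \<alpha> \<gamma> m = {k. \<exists>t::'n \<Rightarrow> nat. (\<Sum>j\<in>UNIV. t j) = m \<and>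
       (\<forall>j. rfun \<alpha> (\<gamma> j) (k $ j) \<le> 2 ^ (t j))}"

definition phi_check :: "nat \<Rightarrow> (nat \<Rightarrow> real) \<Rightarrow> (nat \<Rightarrow> real^'n::finite) \<Rightarrow> int^'n \<Rightarrow> complex" where
  "phi_check N c x k = (1 / of_nat N) * (\<Sum>n=1..N. complex_of_real (c n) * omega k (x n))"

definition phiK :: "(int^'n::finite) set \<Rightarrow> nat \<Rightarrow> (nat \<Rightarrow> real) \<Rightarrow> (nat \<Rightarrow> real^'n) \<Rightarrow> real^'n \<Rightarrow> complex" where
  "phiK K N c x y = (\<Sum>k\<in>K. phi_check N c x k * cnj (omega k y))"

definition err1 :: "(real^'n::finite \<Rightarrow> complex) \<Rightarrow> (int^'n) set \<Rightarrow> nat \<Rightarrow> (nat \<Rightarrow> real) \<Rightarrow> (nat \<Rightarrow> real^'n) \<Rightarrow> real" where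
  "err1 g K N c x = cmod ((1 / of_nat N) * (\<Sum>n=1..N. complex_of_real (c n) * g (x n))
      - (LINT y : unit_cube | lborel. g y * phiK K N c x y))"

definition err2 :: "(real^'n::finite \<Rightarrow> complex) \<Rightarrow> (int^'n) set \<Rightarrow> nat \<Rightarrow> (nat \<Rightarrow> real) \<Rightarrow> (nat \<Rightarrow> real^'n)
     \<Rightarrow> (nat \<Rightarrow> real^'n) \<Rightarrow> nat \<Rightarrow> real" where
  "err2 g K N c x z L = cmod ((LINT y : unit_cube | lborel. g y * phiK K N c x y)
      - (1 / of_nat L) * (\<Sum>l<L. g (z l) * phiK K N c x (z l)))"

definition mu_bar :: "nat \<Rightarrow> (nat \<Rightarrow> real) \<Rightarrow> real" where
  "mu_bar N c = (1 / real N) * (\<Sum>n=1..N. \<bar>c n\<bar>)"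

definition c_const :: "real \<Rightarrow> ('n::finite \<Rightarrow> real) \<Rightarrow> real" where
  "c_const \<alpha> \<gamma> = sqrt (\<Prod>j\<in>UNIV. max 1 (2 powr (2 * \<alpha>) * \<gamma> j))"

definition zeta_const :: "real \<Rightarrow> nat \<Rightarrow> real" where
  "zeta_const \<delta> d = (1 + 2 * rzeta (1 + 2 * \<delta>)) powr (real d / 2)"

end

theory Submission
  imports Defs
begin

lemma rfun_ge1: "rfun b g h \<ge> 1" by (simp add: rfun_def)

lemma rvec_ge1: "rvec b g k \<ge> 1"
  unfolding rvec_def by (rule prod_ge_1) (simp add: rfun_ge1)

lemma omega_norm[simp]: "cmod (omega k x) = 1"
  unfolding omega_def by (simp add: norm_exp_eq_Re)

lemma omega_add: "omega (k+h) x = omega k x * omega h x"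
  unfolding omega_def
  by (simp add: exp_add[symmetric] distrib_right sum.distrib algebra_simps)

lemma omega_cnj: "omega k x * cnj (omega k x) = 1"
  using complex_norm_square[of "omega k x"] by simp

lemma cnj_omega_add: "cnj (omega k x) * cnj (omega h x) = cnj (omega (k+h) x)"
  by (simp add: omega_add)

lemma omega_cont: "continuous_on UNIV (omega k)"
  unfolding omega_def by (intro continuous_intros)

lemma omega_meas[measurable]: "omega k \<in> borel_measurable lborel"
  using borel_measurable_continuous_onI[OF omega_cont] by simp



lemma phi_check_bound:
  assumes "N > 0"
  shows "cmod (phi_check N c x k) \<le> mu_bar N c"
proof -
  have "cmod (phi_check N c x k) = (1 / real N) * cmod (\<Sum>n=1..N. complex_of_real (c n) * omega k (x n))"
    unfolding phi_check_def by (simp add: norm_mult norm_divide)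
  also have "\<dots> \<le> (1 / real N) * (\<Sum>n=1..N. \<bar>c n\<bar>)"
  proof (rule mult_left_mono)
    have "cmod (\<Sum>n=1..N. complex_of_real (c n) * omega k (x n)) \<le> (\<Sum>n=1..N. cmod (complex_of_real (c n) * omega k (x n)))"
      by (rule norm_sum)
    also have "\<dots> = (\<Sum>n=1..N. \<bar>c n\<bar>)" by (simp add: norm_mult)
    finally show "cmod (\<Sum>n=1..N. complex_of_real (c n) * omega k (x n)) \<le> (\<Sum>n=1..N. \<bar>c n\<bar>)" .
  qed simp
  finally show ?thesis unfolding mu_bar_def .
qed

lemma mu_bar_nonneg: "mu_bar N c \<ge> 0"
  unfolding mu_bar_def by (simp add: sum_nonneg)

lemma hypcross_rvec_le:
  assumes "k \<in> hypcross a g m"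
  shows "rvec a g k \<le> 2 ^ m"
proof -
  obtain t where t: "(\<Sum>j\<in>UNIV. t j) = m" "\<forall>j. rfun a (g j) (k $ j) \<le> 2 ^ (t j)"
    using assms unfolding hypcross_def by blast
  have "rvec a g k \<le> (\<Prod>j\<in>UNIV. (2::real) ^ t j)"
    unfolding rvec_def by (rule prod_mono) (use t rfun_ge1 in \<open>auto intro: order_trans[OF zero_le_one]\<close>)
  also have "\<dots> = 2 ^ m" using t(1) by (simp add: power_sum[symmetric])
  finally show ?thesis .
qed

lemma finite_int_box: "finite {k :: int^'n::finite. \<forall>j. \<bar>k $ j\<bar> \<le> M}"
proof -
  have "{k :: int^'n. \<forall>j. \<bar>k $ j\<bar> \<le> M} \<subseteq> (\<lambda>f. \<chi> j. f j) ` (PiE UNIV (\<lambda>_. {-M..M}))"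
  proof
    fix k :: "int^'n" assume "k \<in> {k. \<forall>j. \<bar>k $ j\<bar> \<le> M}"
    then have "(\<lambda>j. k $ j) \<in> PiE UNIV (\<lambda>_. {-M..M})" by (auto simp: abs_le_iff) (metis minus_le_iff)
    moreover have "k = (\<chi> j. (\<lambda>j. k $ j) j)" by simp
    ultimately show "k \<in> (\<lambda>f. \<chi> j. f j) ` (PiE UNIV (\<lambda>_. {-M..M}))" by blast
  qed
  moreover have "finite ((\<lambda>f. \<chi> j. f j) ` (PiE UNIV (\<lambda>_. {-M..M})) :: (int^'n) set)"
    by (intro finite_imageI finite_PiE) auto
  ultimately show ?thesis by (rule finite_subset)
qed

lemma hypcross_finite:
  assumes "a \<ge> 1/2" "\<forall>j. 0 < g j \<and> g j \<le> 1"
  shows "finite (hypcross a g m)"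
proof -
  have "hypcross a g m \<subseteq> {k. \<forall>j. \<bar>k $ j\<bar> \<le> 2 ^ m}"
  proof safe
    fix k j assume k: "k \<in> hypcross a g m"
    obtain t where t: "(\<Sum>j\<in>UNIV. t j) = m" "\<forall>j. rfun a (g j) (k $ j) \<le> 2 ^ (t j)"
      using k unfolding hypcross_def by blast
    have tj: "t j \<le> m" using t(1) by (metis UNIV_I finite member_le_sum zero_le)
    have "rfun a (g j) (k $ j) \<le> 2 ^ m"
      using t(2) tj by (meson order_trans one_le_numeral power_increasing)
    then have r: "\<bar>real_of_int (k $ j)\<bar> powr (2 * a) / g j \<le> 2 ^ m"
      unfolding rfun_def by simp
    have "\<bar>real_of_int (k $ j)\<bar> powr (2 * a) \<le> \<bar>real_of_int (k $ j)\<bar> powr (2 * a) / g j"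
      using assms(2) by (simp add: le_divide_eq mult_left_le)
    with r have r2: "\<bar>real_of_int (k $ j)\<bar> powr (2 * a) \<le> 2 ^ m" by linarith
    show "\<bar>k $ j\<bar> \<le> 2 ^ m"
    proof (cases "k $ j = 0")
      case False
      then have "\<bar>real_of_int (k $ j)\<bar> \<ge> 1" by linarith
      then have "\<bar>real_of_int (k $ j)\<bar> powr 1 \<le> \<bar>real_of_int (k $ j)\<bar> powr (2 * a)"
        using assms(1) by (intro powr_mono) auto
      with r2 have "\<bar>real_of_int (k $ j)\<bar> \<le> 2 ^ m" using \<open>\<bar>real_of_int (k $ j)\<bar> \<ge> 1\<close> by simp
      then show ?thesis by (metis of_int_abs of_int_le_iff of_int_numeral of_int_power)
    qed simp
  qed
  then show ?thesis using finite_subset finite_int_box by blast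
qed



lemma rfun_log_bounds:
  fixes r :: real
  assumes "r \<ge> 1"
  defines "s \<equiv> nat \<lceil>log 2 r\<rceil>"
  shows "r \<le> 2 ^ s" "2 powr (real s - 1) \<le> r"
proof -
  have l0: "log 2 r \<ge> 0" using assms by simp
  have "r = 2 powr (log 2 r)" using assms by simp
  also have "\<dots> \<le> 2 powr (real s)" unfolding s_def
    by (intro powr_mono) (use l0 in auto)
  also have "\<dots> = 2 ^ s" by (simp add: powr_realpow)
  finally show "r \<le> 2 ^ s" .
  show "2 powr (real s - 1) \<le> r"
  proof (cases "s = 0")
    case True then show ?thesis using assms by (simp add: powr_minus)
  next
    case False
    have "real s = of_int \<lceil>log 2 r\<rceil>" using l0 unfolding s_def by simp
    then have "real s - 1 \<le> log 2 r" using ceiling_correct[of "log 2 r"] by linarith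
    then have "2 powr (real s - 1) \<le> 2 powr (log 2 r)" by (intro powr_mono) auto
    also have "\<dots> = r" using assms by simp
    finally show ?thesis .
  qed
qed

lemma not_hypcross_rvec_ge:
  fixes k :: "int^'n::finite"
  assumes "k \<notin> hypcross a g m"
  shows "rvec a g k \<ge> 2 powr (real m - real CARD('n) + 1)"
proof (rule ccontr)
  assume "\<not> ?thesis"
  then have lt: "rvec a g k < 2 powr (real m - real CARD('n) + 1)" by simp
  define s where "s j = nat \<lceil>log 2 (rfun a (g j) (k $ j))\<rceil>" for j
  have up: "rfun a (g j) (k $ j) \<le> 2 ^ s j" for j
    unfolding s_def by (rule rfun_log_bounds(1)[OF rfun_ge1])
  have lo: "2 powr (real (s j) - 1) \<le> rfun a (g j) (k $ j)" for j
    unfolding s_def by (rule rfun_log_bounds(2)[OF rfun_ge1])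
  have "2 powr (real (sum s UNIV) - real CARD('n)) = 2 powr (\<Sum>j\<in>UNIV. real (s j) - 1)"
    by (simp add: sum_subtractf)
  also have "\<dots> = (\<Prod>j\<in>UNIV. 2 powr (real (s j) - 1))" by (simp add: powr_sum)
  also have "\<dots> \<le> rvec a g k" unfolding rvec_def
    by (rule prod_mono) (use lo in auto)
  finally have "2 powr (real (sum s UNIV) - real CARD('n)) < 2 powr (real m - real CARD('n) + 1)"
    using lt by linarith
  then have "real (sum s UNIV) - real CARD('n) < real m - real CARD('n) + 1" by simp
  then have sle: "sum s UNIV \<le> m" by linarith
  obtain j0 :: 'n where True by blast
  define t where "t j = s j + (if j = j0 then m - sum s UNIV else 0)" for j
  have "(\<Sum>j\<in>UNIV. t j) = sum s UNIV + (\<Sum>j\<in>UNIV. (if j = j0 then m - sum s UNIV else 0))"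
    unfolding t_def by (simp add: sum.distrib)
  also have "\<dots> = m" using sle by simp
  finally have ts: "(\<Sum>j\<in>UNIV. t j) = m" .
  have "rfun a (g j) (k $ j) \<le> 2 ^ t j" for j
    using up[of j] by (smt (verit) le_add1 one_le_numeral power_increasing t_def)
  with ts have "k \<in> hypcross a g m" unfolding hypcross_def by blast
  with assms show False by simp
qed



lemma rfun_nonneg: "0 \<le> rfun b g h" using rfun_ge1[of b g h] by linarith

lemma rfun_submult:
  fixes h k :: int
  assumes "a > 0" "gm > 0"
  shows "rfun a gm h \<le> max 1 (2 powr (2*a) * gm) * rfun a gm (h+k) * rfun a gm k"
proof -
  define C where "C = max 1 (2 powr (2*a) * gm)"
  have C1: "C \<ge> 1" unfolding C_def by simp
  have r1: "rfun a gm (h+k) \<ge> 1" "rfun a gm k \<ge> 1" by (rule rfun_ge1)+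
  have "1 * 1 \<le> C * rfun a gm (h+k)" by (rule mult_mono) (use C1 r1 in auto)
  then have "1 * 1 \<le> (C * rfun a gm (h+k)) * rfun a gm k" by (intro mult_mono) (use C1 r1 in auto)
  then have one: "1 \<le> C * rfun a gm (h+k) * rfun a gm k" by simp
  have "rfun a gm h \<le> C * rfun a gm (h+k) * rfun a gm k"
  proof (cases "h = 0 \<or> k = 0 \<or> h + k = 0")
    case True
    then consider "h = 0" | "k = 0" | "h + k = 0" by blast
    then show ?thesis
    proof cases
      case 1
      then have "rfun a gm h = 1" by (simp add: rfun_def)
      then show ?thesis using one by simp
    next
      case 2
      then have "rfun a gm k = 1" "h + k = h" by (simp_all add: rfun_def)
      moreover have "rfun a gm h \<le> C * rfun a gm h"
        using C1 rfun_ge1[of a gm h] by (simp add: mult_le_cancel_right1)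
      ultimately show ?thesis by simp
    next
      case 3
      then have hk: "h = - k" by simp
      have "rfun a gm h = rfun a gm k" unfolding hk rfun_def by simp
      moreover have "rfun a gm (h+k) = 1" using 3 by (simp add: rfun_def)
      moreover have "rfun a gm k \<le> C * rfun a gm k"
        using C1 rfun_ge1[of a gm k] by (simp add: mult_le_cancel_right1)
      ultimately show ?thesis by simp
    qed
  next
    case False
    define X where "X = \<bar>real_of_int h\<bar>"
    define U where "U = \<bar>real_of_int (h+k)\<bar>"
    define K where "K = \<bar>real_of_int k\<bar>"
    have U1: "U \<ge> 1" using False unfolding U_def by linarith
    have K1: "K \<ge> 1" using False unfolding K_def by linarith
    have "X \<le> U + K" unfolding X_def U_def K_def by linarith
    also have "U + K \<le> 2 * U * K"
    proof -
      have "0 \<le> (U - 1) * (K - 1)" using U1 K1 by simp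
      then have "U + K \<le> U * K + 1" by (simp add: algebra_simps)
      moreover have "1 \<le> U * K" using U1 K1 by (metis mult_mono mult_1 order_trans zero_le_one)
      ultimately show ?thesis by linarith
    qed
    finally have XUK: "X \<le> 2 * U * K" .
    have "X powr (2*a) \<le> (2 * U * K) powr (2*a)"
      using XUK assms by (intro powr_mono2) (auto simp: X_def)
    also have "\<dots> = 2 powr (2*a) * U powr (2*a) * K powr (2*a)"
      using U1 K1 by (simp add: powr_mult)
    finally have e0: "X powr (2*a) \<le> 2 powr (2*a) * U powr (2*a) * K powr (2*a)" .
    have e1': "(2 powr (2*a) * gm) * (U powr (2*a) / gm) * (K powr (2*a) / gm) = 2 powr (2*a) * U powr (2*a) * K powr (2*a) / gm"
      using assms by (simp add: field_simps)
    have e1: "X powr (2*a) / gm \<le> (2 powr (2*a) * gm) * (U powr (2*a) / gm) * (K powr (2*a) / gm)"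
      unfolding e1' using e0 assms by (simp add: divide_right_mono)
    have m1: "(2 powr (2*a) * gm) * (U powr (2*a) / gm) \<le> C * rfun a gm (h+k)"
      unfolding C_def rfun_def U_def[symmetric]
      by (rule mult_mono) (use assms in auto)
    have m2: "(2 powr (2*a) * gm) * (U powr (2*a) / gm) * (K powr (2*a) / gm) \<le> C * rfun a gm (h+k) * rfun a gm k"
    proof (rule mult_mono[OF m1])
      show "K powr (2*a) / gm \<le> rfun a gm k" unfolding rfun_def K_def by simp
      show "0 \<le> C * rfun a gm (h+k)" using C1 r1 by simp
      show "0 \<le> K powr (2*a) / gm" using assms by simp
    qed
    from e1 m2 have "X powr (2*a) / gm \<le> C * rfun a gm (h+k) * rfun a gm k" by linarith
    then show ?thesis using one unfolding rfun_def X_def by simp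
  qed
  then show ?thesis unfolding C_def .
qed



lemma rfun_shift:
  fixes h :: int
  assumes "2*b + 1 + 2*d = 2*a" "b \<ge> 0" "d \<ge> 0" "0 < gm" "gm \<le> 1"
  shows "rfun b gm h * max (\<bar>real_of_int h\<bar> powr (1 + 2*d)) 1 \<le> rfun a gm h"
proof (cases "h = 0")
  case True then show ?thesis by (simp add: rfun_def)
next
  case False
  define X where "X = \<bar>real_of_int h\<bar>"
  have X1: "X \<ge> 1" using False unfolding X_def by linarith
  have m1: "max (X powr (1 + 2*d)) 1 = X powr (1 + 2*d)"
    using X1 assms by (simp add: ge_one_powr_ge_zero)
  have p: "X powr (2*b) * X powr (1+2*d) = X powr (2*a)"
    proof -
    have "2*b + (1+2*d) = 2*a" using assms(1) by simp
    then show ?thesis using X1 by (simp add: powr_add[symmetric])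
  qed
  have q: "X powr (1+2*d) \<le> X powr (2*a)" using X1 assms by (intro powr_mono) auto
  have q2: "X powr (2*a) \<le> X powr (2*a) / gm" using assms by (simp add: le_divide_eq mult_left_le)
  have "rfun b gm h * max (X powr (1 + 2*d)) 1 = max (X powr (2*b) / gm * X powr (1+2*d)) (X powr (1+2*d))"
    unfolding rfun_def X_def[symmetric] m1 by (simp add: max_mult_distrib_right)
  also have "\<dots> \<le> X powr (2*a) / gm"
  proof -
    have e: "X powr (2*b) / gm * X powr (1+2*d) = X powr (2*a) / gm"
      by (metis p times_divide_eq_left)
    show ?thesis unfolding e using q q2 by simp
  qed
  also have "\<dots> \<le> rfun a gm h" unfolding rfun_def X_def by simp
  finally show ?thesis unfolding X_def .
qed

lemma c_const_sq: "(c_const a g)^2 = (\<Prod>j\<in>UNIV. max 1 (2 powr (2 * a) * g j))"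
  unfolding c_const_def by (simp add: prod_nonneg)

lemma rvec_submult:
  fixes h k :: "int^'n::finite"
  assumes "a > 0" "\<forall>j. g j > 0"
  shows "rvec a g h \<le> (c_const a g)^2 * rvec a g (h+k) * rvec a g k"
proof -
  have "rvec a g h \<le> (\<Prod>j\<in>UNIV. max 1 (2 powr (2*a) * g j) * rfun a (g j) ((h+k) $ j) * rfun a (g j) (k $ j))"
    unfolding rvec_def by (rule prod_mono) (use rfun_submult assms rfun_nonneg in auto)
  also have "\<dots> = (c_const a g)^2 * rvec a g (h+k) * rvec a g k"
    unfolding c_const_sq rvec_def by (simp add: prod.distrib)
  finally show ?thesis .
qed

definition wfun :: "real \<Rightarrow> int^'n::finite \<Rightarrow> real" where
  "wfun d h = (\<Prod>j\<in>UNIV. max (\<bar>real_of_int (h $ j)\<bar> powr (1 + 2*d)) 1)"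

lemma wfun_ge1: "wfun d h \<ge> 1" unfolding wfun_def by (rule prod_ge_1) auto

lemma rvec_shift:
  assumes "2*b + 1 + 2*d = 2*a" "b \<ge> 0" "d \<ge> 0" "\<forall>j. 0 < g j \<and> g j \<le> 1"
  shows "rvec b g h * wfun d h \<le> rvec a g h"
  unfolding rvec_def wfun_def prod.distrib[symmetric]
  by (rule prod_mono) (use rfun_shift[OF assms(1-3)] assms(4) rfun_nonneg in auto)



definition vfun :: "real \<Rightarrow> int \<Rightarrow> real" where
  "vfun s z = inverse (max (\<bar>real_of_int z\<bar> powr s) 1)"

lemma rzeta_has_sum:
  assumes "s > 1"
  shows "((\<lambda>n::nat. 1 / real (Suc n) powr s) has_sum rzeta s) UNIV"
proof -
  have "summable (\<lambda>n::nat. real n powr (-s))" using assms by (simp add: summable_real_powr_iff)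
  then have "summable (\<lambda>n::nat. real (Suc n) powr (-s))" by (subst summable_Suc_iff)
  moreover have "real (Suc n) powr (-s) = 1 / real (Suc n) powr s" for n
    by (simp add: powr_minus_divide)
  ultimately have "summable (\<lambda>n::nat. 1 / real (Suc n) powr s)" by simp
  then have "(\<lambda>n::nat. 1 / real (Suc n) powr s) sums rzeta s"
    unfolding rzeta_def by (rule summable_sums)
  then show ?thesis by (rule sums_nonneg_imp_has_sum) simp
qed

lemma vfun_has_sum:
  assumes "s > 1"
  shows "(vfun s has_sum (1 + 2 * rzeta s)) UNIV"
proof -
  have pos: "(vfun s has_sum rzeta s) {0<..}"
  proof -
    have "((\<lambda>n::nat. vfun s (int (Suc n))) has_sum rzeta s) UNIV"
    proof -
      have "vfun s (int (Suc n)) = 1 / real (Suc n) powr s" for n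
      proof -
        have "real (Suc n) powr s \<ge> 1" using assms by (intro ge_one_powr_ge_zero) auto
        then show ?thesis unfolding vfun_def by (simp add: divide_inverse)
      qed
      then show ?thesis using rzeta_has_sum[OF assms] by simp
    qed
    moreover have "bij_betw (\<lambda>n::nat. int (Suc n)) UNIV {0<..}"
      by (rule bij_betwI[where g="\<lambda>z. nat z - 1"]) auto
    ultimately show ?thesis using has_sum_reindex_bij_betw[of "\<lambda>n::nat. int (Suc n)" UNIV "{0<..}" "vfun s"] by simp
  qed
  have neg: "(vfun s has_sum rzeta s) {..<0}"
  proof -
    have "((\<lambda>z. vfun s (- z)) has_sum rzeta s) {0<..}"
    proof -
      have "(\<lambda>z. vfun s (- z)) = vfun s" by (simp add: vfun_def fun_eq_iff)
      then show ?thesis using pos by simp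
    qed
    moreover have "bij_betw (\<lambda>z::int. - z) {0<..} {..<0}"
      by (rule bij_betwI[where g="\<lambda>z. - z"]) auto
    ultimately show ?thesis using has_sum_reindex_bij_betw[of "\<lambda>z::int. - z" "{0<..}" "{..<0}" "vfun s"] by simp
  qed
  have zero: "(vfun s has_sum 1) {0}" by (rule has_sum_finiteI) (simp_all add: vfun_def)
  have "(vfun s has_sum (1 + rzeta s)) ({0} \<union> {0<..})"
    by (rule has_sum_Un_disjoint[OF zero pos]) auto
  then have "(vfun s has_sum (1 + rzeta s + rzeta s)) (({0} \<union> {0<..}) \<union> {..<0})"
    by (rule has_sum_Un_disjoint[OF _ neg]) auto
  moreover have "({0} \<union> {0<..}) \<union> {..<0::int} = UNIV" by auto
  ultimately show ?thesis by (simp add: algebra_simps)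
qed

lemma wfun_inverse: "inverse (wfun d h) = (\<Prod>j\<in>UNIV. vfun (1 + 2*d) (h $ j))"
  unfolding wfun_def vfun_def prod_inversef[symmetric] by (simp add: o_def)

lemma vfun_nonneg: "vfun s z \<ge> 0" unfolding vfun_def by simp

lemma wfun_has_sum:
  assumes "d > 0"
  shows "((\<lambda>h::int^'n::finite. inverse (wfun d h)) has_sum (1 + 2 * rzeta (1 + 2*d)) ^ CARD('n)) UNIV"
proof -
  define s where "s = 1 + 2*d"
  have s1: "s > 1" using assms unfolding s_def by simp
  have hs: "(vfun s has_sum (1 + 2 * rzeta s)) UNIV" by (rule vfun_has_sum[OF s1])
  have abs1: "(\<lambda>z. norm (vfun s z)) summable_on UNIV"
    using hs vfun_nonneg by (simp add: summable_on_def) blast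
  have old: "Infinite_Set_Sum.abs_summable_on (vfun s) UNIV"
    using abs1 abs_summable_equivalent by blast
  have "Infinite_Set_Sum.abs_summable_on (\<lambda>p. \<Prod>j\<in>UNIV. vfun s (p j)) (PiE UNIV (\<lambda>_::'n. UNIV))"
    by (rule abs_summable_on_prod_PiE) (use old in auto)
  then have sp: "(\<lambda>p. \<Prod>j\<in>UNIV. vfun s (p j)) summable_on (PiE UNIV (\<lambda>_::'n. UNIV))"
    using abs_summable_equivalent abs_summable_summable by blast
  have "infsum (\<lambda>p. \<Prod>j\<in>UNIV. vfun s (p j)) (PiE UNIV (\<lambda>_::'n. UNIV)) = (\<Prod>j\<in>(UNIV::'n set). infsum (vfun s) UNIV)"
    by (rule infsum_prod_PiE_abs) (use abs1 in auto)
  also have "\<dots> = (1 + 2 * rzeta s) ^ CARD('n)" using hs by (simp add: infsumI)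
  finally have "((\<lambda>p. \<Prod>j\<in>UNIV. vfun s (p j)) has_sum (1 + 2 * rzeta s) ^ CARD('n)) (PiE UNIV (\<lambda>_::'n. UNIV))"
    using sp by (metis has_sum_infsum)
  moreover have "bij_betw (\<lambda>h::int^'n. \<lambda>j. h $ j) UNIV (PiE UNIV (\<lambda>_::'n. UNIV))"
    by (rule bij_betwI[where g="\<lambda>p. \<chi> j. p j"]) (auto simp: vec_eq_iff)
  ultimately have "((\<lambda>h::int^'n. \<Prod>j\<in>UNIV. vfun s (h $ j)) has_sum (1 + 2 * rzeta s) ^ CARD('n)) UNIV"
    using has_sum_reindex_bij_betw[of "\<lambda>h::int^'n. \<lambda>j. h $ j" UNIV "PiE UNIV (\<lambda>_::'n. UNIV)" "\<lambda>p. \<Prod>j\<in>UNIV. vfun s (p j)"]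
    by simp
  then show ?thesis unfolding wfun_inverse s_def .
qed



lemma has_sum_finite_sum:
  fixes f :: "'i \<Rightarrow> 'a \<Rightarrow> 'b::topological_comm_monoid_add"
  assumes "finite I" "\<And>i. i \<in> I \<Longrightarrow> (f i has_sum s i) A"
  shows "((\<lambda>x. \<Sum>i\<in>I. f i x) has_sum (\<Sum>i\<in>I. s i)) A"
  using assms
proof (induction I rule: finite_induct)
  case empty then show ?case by simp
next
  case (insert i I)
  have "((\<lambda>x. f i x + (\<Sum>i\<in>I. f i x)) has_sum (s i + (\<Sum>i\<in>I. s i))) A"
    by (rule has_sum_add) (use insert in auto)
  then show ?case using insert by simp
qed

lemma set_integral_sum':
  fixes f :: "'i \<Rightarrow> 'a \<Rightarrow> 'b::{banach, second_countable_topology}"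
  assumes "\<And>i. i \<in> I \<Longrightarrow> set_integrable M A (f i)"
  shows "(LINT x:A|M. (\<Sum>i\<in>I. f i x)) = (\<Sum>i\<in>I. (LINT x:A|M. f i x))"
  using assms unfolding set_lebesgue_integral_def set_integrable_def
  by (simp add: scaleR_sum_right integral_sum)


lemma set_integrable_mult_bounded:
  fixes g h :: "'a \<Rightarrow> complex"
  assumes "set_integrable M A g" "h \<in> borel_measurable M" "\<And>x. cmod (h x) \<le> B"
  shows "set_integrable M A (\<lambda>x. g x * h x)"
proof (rule set_integrable_bound[where f="\<lambda>x. complex_of_real B * g x"])
  show "set_integrable M A (\<lambda>x. complex_of_real B * g x)" using assms(1) by simp
  have gm: "(\<lambda>x. indicator A x *\<^sub>R g x) \<in> borel_measurable M"
    using assms(1) unfolding set_integrable_def by (rule borel_measurable_integrable)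
  have eq: "(\<lambda>x. indicator A x *\<^sub>R (g x * h x)) = (\<lambda>x. (indicator A x *\<^sub>R g x) * h x)"
    by (simp add: fun_eq_iff)
  show "set_borel_measurable M A (\<lambda>x. g x * h x)"
    unfolding set_borel_measurable_def eq using borel_measurable_times[OF gm assms(2)] .
  have B0: "B \<ge> 0" using assms(3)[of undefined] norm_ge_zero[of "h undefined"] by linarith
  show "AE x in M. x \<in> A \<longrightarrow> cmod (g x * h x) \<le> cmod (complex_of_real B * g x)"
  proof (intro AE_I2 impI)
    fix x
    have "cmod (g x) * cmod (h x) \<le> cmod (g x) * B" by (rule mult_left_mono[OF assms(3)]) simp
    then show "cmod (g x * h x) \<le> cmod (complex_of_real B * g x)"
      using B0 by (simp add: norm_mult mult.commute)
  qed
qed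


lemma ghat_abs_summable:
  assumes "in_A a gm g"
  shows "(\<lambda>k. cmod (fourier_coeff g k)) summable_on UNIV"
proof (rule summable_on_comparison_test)
  show "(\<lambda>k. sqrt (rvec a gm k) * cmod (fourier_coeff g k)) summable_on UNIV"
    using assms unfolding in_A_def by simp
  fix k
  have "1 \<le> sqrt (rvec a gm k)" using rvec_ge1 by simp
  then show "cmod (fourier_coeff g k) \<le> sqrt (rvec a gm k) * cmod (fourier_coeff g k)"
    by (simp add: mult_le_cancel_right1)
qed simp


lemma cnj_omega_meas[measurable]: "(\<lambda>x. cnj (omega k x)) \<in> borel_measurable lborel"
proof -
  have "continuous_on UNIV (\<lambda>x. cnj (omega k x))"
    using omega_cont[of k] by (intro continuous_intros) (simp add: continuous_on_eq_continuous_within)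
  then show ?thesis using borel_measurable_continuous_onI by simp
qed

lemma phiK_meas[measurable]: "phiK K N c x \<in> borel_measurable lborel"
  unfolding phiK_def by measurable




lemma fourier_has_sum:
  assumes "in_A a gm g" "fourier_rep g" "y \<in> unit_cube"
  shows "((\<lambda>k. fourier_coeff g k * omega k y) has_sum g y) UNIV"
proof -
  have n: "(\<lambda>k. norm (fourier_coeff g k * omega k y)) = (\<lambda>k. cmod (fourier_coeff g k))"
    by (simp add: norm_mult)
  have s: "(\<lambda>k. fourier_coeff g k * omega k y) summable_on UNIV"
    by (rule abs_summable_summable) (unfold n, rule ghat_abs_summable[OF assms(1)])
  have eq: "g y = infsum (\<lambda>k. fourier_coeff g k * omega k y) UNIV"
    using assms(2,3) unfolding fourier_rep_def by blast
  show ?thesis using has_sum_infsum[OF s] unfolding eq[symmetric] .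
qed

lemma g_bound:
  assumes "in_A a gm g" "fourier_rep g" "y \<in> unit_cube"
  shows "cmod (g y) \<le> infsum (\<lambda>k. cmod (fourier_coeff g k)) UNIV"
proof -
  have n: "(\<lambda>k. norm (fourier_coeff g k * omega k y)) = (\<lambda>k. cmod (fourier_coeff g k))"
    by (simp add: norm_mult)
  have eq: "g y = infsum (\<lambda>k. fourier_coeff g k * omega k y) UNIV"
    using assms(2,3) unfolding fourier_rep_def by blast
  have "cmod (infsum (\<lambda>k. fourier_coeff g k * omega k y) UNIV) \<le> infsum (\<lambda>k. cmod (fourier_coeff g k * omega k y)) UNIV"
    by (rule norm_infsum_bound) (unfold n, rule ghat_abs_summable[OF assms(1)])
  then show ?thesis unfolding eq[symmetric] n .
qed


lemma g_set_integrable_omega: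
  assumes "in_A a gm g"
  shows "set_integrable lborel unit_cube (\<lambda>y. g y * cnj (omega k y))"
  by (rule set_integrable_mult_bounded[where B=1]) (use assms in \<open>auto simp: in_A_def\<close>)




lemma err1_has_sum:
  assumes "in_A a gm g" "fourier_rep g" "N > 0" "\<forall>n\<in>{1..N}. x n \<in> unit_cube"
  shows "((\<lambda>k. fourier_coeff g k * phi_check N c x k) has_sum
           ((1 / of_nat N) * (\<Sum>n=1..N. complex_of_real (c n) * g (x n)))) UNIV"
proof -
  have "((\<lambda>k. complex_of_real (c n) * (fourier_coeff g k * omega k (x n))) has_sum (complex_of_real (c n) * g (x n))) UNIV"
    if "n \<in> {1..N}" for n
    by (rule has_sum_cmult_right, rule fourier_has_sum) (use assms that in auto)
  then have "((\<lambda>k. \<Sum>n=1..N. complex_of_real (c n) * (fourier_coeff g k * omega k (x n))) has_sum (\<Sum>n=1..N. complex_of_real (c n) * g (x n))) UNIV"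
    by (intro has_sum_finite_sum) auto
  then have "((\<lambda>k. (1 / of_nat N) * (\<Sum>n=1..N. complex_of_real (c n) * (fourier_coeff g k * omega k (x n)))) has_sum ((1 / of_nat N) * (\<Sum>n=1..N. complex_of_real (c n) * g (x n)))) UNIV"
    by (rule has_sum_cmult_right)
  moreover have "(1 / of_nat N) * (\<Sum>n=1..N. complex_of_real (c n) * (fourier_coeff g k * omega k (x n))) = fourier_coeff g k * phi_check N c x k" for k
    unfolding phi_check_def by (simp add: sum_distrib_left algebra_simps)
  ultimately show ?thesis by simp
qed

lemma int_g_phiK:
  assumes "in_A a gm g"
  shows "(LINT y:unit_cube|lborel. g y * phiK K N c x y) = (\<Sum>k\<in>K. fourier_coeff g k * phi_check N c x k)"
proof -
  have "(LINT y:unit_cube|lborel. g y * phiK K N c x y) = (LINT y:unit_cube|lborel. (\<Sum>k\<in>K. phi_check N c x k * (g y * cnj (omega k y))))"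
    unfolding phiK_def by (simp add: sum_distrib_left algebra_simps)
  also have "\<dots> = (\<Sum>k\<in>K. (LINT y:unit_cube|lborel. phi_check N c x k * (g y * cnj (omega k y))))"
    by (rule set_integral_sum') (use g_set_integrable_omega[OF assms] in simp)
  also have "\<dots> = (\<Sum>k\<in>K. phi_check N c x k * fourier_coeff g k)"
    unfolding fourier_coeff_def by simp
  finally show ?thesis by (simp add: mult.commute)
qed

lemma err1_bound:
  fixes g :: "real^'n::finite \<Rightarrow> complex"
  assumes "in_A a gm g" "fourier_rep g" "N > 0" "\<forall>n\<in>{1..N}. x n \<in> unit_cube"
    and "a \<ge> 1/2" "\<forall>j. 0 < gm j \<and> gm j \<le> 1"
  shows "err1 g (hypcross a gm m) N c x \<le> A_norm a gm g / sqrt (2 powr (real m - real CARD('n) + 1)) * mu_bar N c"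
proof -
  define K where "K = hypcross a gm m"
  define F where "F k = fourier_coeff g k * phi_check N c x k" for k
  define S where "S = (1 / of_nat N) * (\<Sum>n=1..N. complex_of_real (c n) * g (x n))"
  define P :: real where "P = 2 powr (real m - real CARD('n) + 1)"
  define mu where "mu = mu_bar N c"
  define ak where "ak k = sqrt (rvec a gm k) * cmod (fourier_coeff g k)" for k
  have finK: "finite K" unfolding K_def by (rule hypcross_finite) (use assms in auto)
  have P0: "P > 0" unfolding P_def by simp
  have mu0: "mu \<ge> 0" unfolding mu_def by (rule mu_bar_nonneg)
  have aks: "ak summable_on UNIV" using assms(1) unfolding in_A_def ak_def by simp
  have ak0: "ak k \<ge> 0" for k unfolding ak_def using rvec_ge1[of a gm k] by simp
  have hs: "(F has_sum S) UNIV" unfolding F_def S_def by (rule err1_has_sum) (use assms in auto)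
  have absF: "(\<lambda>k. norm (F k)) summable_on UNIV"
  proof (rule summable_on_comparison_test)
    show "(\<lambda>k. cmod (fourier_coeff g k) * mu) summable_on UNIV"
      by (rule summable_on_cmult_left, rule ghat_abs_summable[OF assms(1)])
    show "norm (F k) \<le> cmod (fourier_coeff g k) * mu" for k
      unfolding F_def mu_def norm_mult
      by (rule mult_left_mono[OF phi_check_bound[OF assms(3)]]) simp
  qed simp
  have Fs: "F summable_on UNIV" using hs by (simp add: summable_on_def) blast
  have "infsum F UNIV = infsum F K + infsum F (- K)"
  proof -
    have "infsum F (K \<union> - K) = infsum F K + infsum F (- K)"
      by (rule infsum_Un_disjoint) (use Fs summable_on_subset in auto)
    then show ?thesis by simp
  qed
  moreover have "infsum F UNIV = S" using hs by (simp add: infsumI)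
  moreover have "infsum F K = (LINT y:unit_cube|lborel. g y * phiK K N c x y)"
    using finK int_g_phiK[OF assms(1)] unfolding F_def by simp
  ultimately have e1: "err1 g K N c x = cmod (infsum F (- K))"
    unfolding err1_def S_def by (simp add: algebra_simps)
  also have "\<dots> \<le> infsum (\<lambda>k. norm (F k)) (- K)"
    by (rule norm_infsum_bound) (use absF summable_on_subset in auto)
  also have "\<dots> \<le> infsum (\<lambda>k. mu / sqrt P * ak k) (- K)"
  proof (rule infsum_mono)
    show "(\<lambda>k. norm (F k)) summable_on - K" using absF summable_on_subset by blast
    show "(\<lambda>k. mu / sqrt P * ak k) summable_on - K"
      by (rule summable_on_cmult_right) (use aks summable_on_subset in blast)
    fix k assume "k \<in> - K"
    then have "rvec a gm k \<ge> P" unfolding K_def P_def using not_hypcross_rvec_ge by auto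
    then have sq: "sqrt P \<le> sqrt (rvec a gm k)" by simp
    have "cmod (fourier_coeff g k) * sqrt P \<le> ak k"
      unfolding ak_def using mult_left_mono[OF sq, of "cmod (fourier_coeff g k)"] by (simp add: mult.commute)
    then have c1: "cmod (fourier_coeff g k) \<le> ak k / sqrt P" using P0 by (simp add: le_divide_eq)
    have "norm (F k) \<le> (ak k / sqrt P) * mu"
      unfolding F_def norm_mult mu_def
      by (rule mult_mono[OF c1 phi_check_bound[OF assms(3)]]) (use ak0 P0 in auto)
    then show "norm (F k) \<le> mu / sqrt P * ak k" by (simp add: field_simps)
  qed
  also have "\<dots> = mu / sqrt P * infsum ak (- K)" by (rule infsum_cmult_right')
  also have "\<dots> \<le> mu / sqrt P * infsum ak UNIV"
    by (rule mult_left_mono, rule infsum_mono2) (use aks summable_on_subset ak0 mu0 P0 in auto)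
  also have "infsum ak UNIV = A_norm a gm g" unfolding A_norm_def ak_def by simp
  finally show ?thesis unfolding K_def P_def mu_def by (simp add: field_simps)
qed


lemma phiK_bound: "cmod (phiK K N c x y) \<le> (\<Sum>k\<in>K. cmod (phi_check N c x k))"
  unfolding phiK_def by (rule order_trans[OF norm_sum]) (simp add: norm_mult)

lemma set_integrable_meas:
  assumes "set_integrable M A f"
  shows "set_borel_measurable M A f"
  using assms unfolding set_integrable_def set_borel_measurable_def by (rule borel_measurable_integrable)

lemma prod_set_integrable:
  assumes "in_A a gm g"
  shows "set_integrable lborel unit_cube (\<lambda>y. g y * phiK K N c x y)"
  by (rule set_integrable_mult_bounded[OF _ _ phiK_bound]) (use assms in \<open>auto simp: in_A_def\<close>)

lemma coeff_prod:
  assumes "in_A a gm g"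
  shows "fourier_coeff (\<lambda>y. g y * phiK K N c x y) h = (\<Sum>k\<in>K. phi_check N c x k * fourier_coeff g (k + h))"
proof -
  have "fourier_coeff (\<lambda>y. g y * phiK K N c x y) h = (LINT y:unit_cube|lborel. (\<Sum>k\<in>K. phi_check N c x k * (g y * cnj (omega (k+h) y))))"
    unfolding fourier_coeff_def phiK_def
    by (simp add: sum_distrib_left sum_distrib_right algebra_simps cnj_omega_add[symmetric])
  also have "\<dots> = (\<Sum>k\<in>K. (LINT y:unit_cube|lborel. phi_check N c x k * (g y * cnj (omega (k+h) y))))"
    by (rule set_integral_sum') (use g_set_integrable_omega[OF assms] in simp)
  also have "\<dots> = (\<Sum>k\<in>K. phi_check N c x k * fourier_coeff g (k + h))"
    unfolding fourier_coeff_def by simp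
  finally show ?thesis .
qed

lemma shifted_has_sum:
  assumes "in_A a gm g" "fourier_rep g" "y \<in> unit_cube"
  shows "((\<lambda>h. fourier_coeff g (k + h) * omega h y) has_sum (g y * cnj (omega k y))) UNIV"
proof -
  have hs: "((\<lambda>j. fourier_coeff g j * omega j y) has_sum g y) UNIV" by (rule fourier_has_sum[OF assms])
  have bij: "bij_betw (\<lambda>h. k + h) UNIV UNIV"
    by (rule bij_betwI[where g="\<lambda>j. j - k"]) auto
  have "((\<lambda>h. fourier_coeff g (k + h) * omega (k + h) y) has_sum g y) UNIV"
    using has_sum_reindex_bij_betw[OF bij, of "\<lambda>j. fourier_coeff g j * omega j y"] hs by simp
  then have "((\<lambda>h. cnj (omega k y) * (fourier_coeff g (k + h) * omega (k + h) y)) has_sum (cnj (omega k y) * g y)) UNIV"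
    by (rule has_sum_cmult_right)
  moreover have "cnj (omega k y) * (fourier_coeff g (k + h) * omega (k + h) y) = fourier_coeff g (k + h) * omega h y" for h
  proof -
    have "cnj (omega k y) * (fourier_coeff g (k + h) * omega (k + h) y)
        = fourier_coeff g (k + h) * omega h y * (omega k y * cnj (omega k y))"
      by (simp add: omega_add algebra_simps)
    then show ?thesis by (simp add: omega_cnj)
  qed
  ultimately show ?thesis by (simp add: mult.commute)
qed

lemma rep_prod:
  assumes "in_A a gm g" "fourier_rep g" "finite K"
  shows "fourier_rep (\<lambda>y. g y * phiK K N c x y)"
  unfolding fourier_rep_def
proof
  fix y :: "real^'a" assume y: "y \<in> unit_cube"
  have "((\<lambda>h. \<Sum>k\<in>K. phi_check N c x k * (fourier_coeff g (k + h) * omega h y)) has_sum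
        (\<Sum>k\<in>K. phi_check N c x k * (g y * cnj (omega k y)))) UNIV"
    by (rule has_sum_finite_sum[OF assms(3)], rule has_sum_cmult_right, rule shifted_has_sum[OF assms(1,2) y])
  moreover have "(\<Sum>k\<in>K. phi_check N c x k * (fourier_coeff g (k + h) * omega h y))
     = fourier_coeff (\<lambda>y. g y * phiK K N c x y) h * omega h y" for h
    unfolding coeff_prod[OF assms(1)] sum_distrib_right by (simp add: algebra_simps)
  moreover have "(\<Sum>k\<in>K. phi_check N c x k * (g y * cnj (omega k y))) = g y * phiK K N c x y"
    unfolding phiK_def by (simp add: sum_distrib_left algebra_simps)
  ultimately show "g y * phiK K N c x y = (\<Sum>\<^sub>\<infinity>k. fourier_coeff (\<lambda>y. g y * phiK K N c x y) k * omega k y)"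
    by (simp add: infsumI)
qed

lemma sq_set_integrable:
  fixes f :: "'a \<Rightarrow> complex"
  assumes "set_integrable M A f" "\<And>y. y \<in> A \<Longrightarrow> cmod (f y) \<le> B"
  shows "set_integrable M A (\<lambda>y. (cmod (f y))^2)"
proof (rule set_integrable_bound[where f="\<lambda>y. complex_of_real B * f y"])
  show "set_integrable M A (\<lambda>y. complex_of_real B * f y)" using assms(1) by simp
  have fm: "(\<lambda>x. indicator A x *\<^sub>R f x) \<in> borel_measurable M"
    using set_integrable_meas[OF assms(1)] unfolding set_borel_measurable_def .
  have eq: "(\<lambda>x. indicator A x *\<^sub>R (cmod (f x))^2) = (\<lambda>x. (cmod (indicator A x *\<^sub>R f x))^2)"
    by (rule ext) (simp split: split_indicator)
  show "set_borel_measurable M A (\<lambda>y. (cmod (f y))^2)"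
    unfolding set_borel_measurable_def eq using fm by measurable
  show "AE x in M. x \<in> A \<longrightarrow> norm ((cmod (f x))^2) \<le> cmod (complex_of_real B * f x)"
  proof (intro AE_I2 impI)
    fix x assume x: "x \<in> A"
    have B0: "B \<ge> 0" using assms(2)[OF x] norm_ge_zero[of "f x"] by linarith
    have "cmod (f x) * cmod (f x) \<le> B * cmod (f x)"
      by (rule mult_right_mono[OF assms(2)[OF x]]) simp
    then show "norm ((cmod (f x))^2) \<le> cmod (complex_of_real B * f x)"
      using B0 by (simp add: norm_mult power2_eq_square)
  qed
qed



lemma sum_shift_le:
  fixes ak :: "int^'n::finite \<Rightarrow> real"
  assumes "ak summable_on UNIV" "\<And>j. ak j \<ge> (0::real)" "finite K"
  shows "(\<Sum>k\<in>K. ak (k + h)) \<le> infsum ak UNIV"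
proof -
  have inj: "inj_on (\<lambda>k. k + h) K" by (rule inj_onI) simp
  have "(\<Sum>k\<in>K. ak (k + h)) = sum ak ((\<lambda>k. k + h) ` K)"
    by (simp add: sum.reindex[OF inj])
  also have "\<dots> \<le> infsum ak UNIV"
    by (rule finite_sum_le_infsum) (use assms in auto)
  finally show ?thesis .
qed

lemma coef_bound:
  fixes g :: "real^'n::finite \<Rightarrow> complex"
  assumes "a > 0" "\<forall>j. 0 < gm j \<and> gm j \<le> 1" "2*b + 1 + 2*d = 2*a" "b \<ge> 0" "d \<ge> 0"
    and "in_A a gm g" "N > 0" "finite K" "\<forall>k\<in>K. rvec a gm k \<le> 2 ^ m"
  shows "rvec b gm h * (cmod (\<Sum>k\<in>K. phi_check N c x k * fourier_coeff g (k + h)))^2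
         \<le> (mu_bar N c * c_const a gm * sqrt (2 ^ m) * A_norm a gm g)^2 * inverse (wfun d h)"
proof -
  define ak where "ak j = sqrt (rvec a gm j) * cmod (fourier_coeff g j)" for j
  define mu where "mu = mu_bar N c"
  define cc where "cc = c_const a gm"
  define A where "A = A_norm a gm g"
  define w where "w = wfun d h"
  define Q where "Q = cc^2 * 2^m / w"
  have w1: "w \<ge> 1" unfolding w_def by (rule wfun_ge1)
  have mu0: "mu \<ge> 0" unfolding mu_def by (rule mu_bar_nonneg)
  have cc0: "cc \<ge> 0" unfolding cc_def c_const_def by (simp add: prod_nonneg)
  have Q0: "Q \<ge> 0" unfolding Q_def using w1 by simp
  have aks: "ak summable_on UNIV" using assms(6) unfolding in_A_def ak_def by simp
  have ak0: "ak j \<ge> 0" for j unfolding ak_def using rvec_ge1[of a gm j] by simp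
  have A_eq: "infsum ak UNIV = A" unfolding A_def A_norm_def ak_def by simp
  have rb: "rvec b gm h \<le> rvec a gm h / w"
    using rvec_shift[OF assms(3,4,5,2), of h] w1 unfolding w_def by (simp add: le_divide_eq)
  have key: "sqrt (rvec b gm h) * cmod (fourier_coeff g (k + h)) \<le> sqrt Q * ak (k + h)" if k: "k \<in> K" for k
  proof -
    have "rvec a gm h \<le> cc^2 * rvec a gm (h + k) * rvec a gm k"
      unfolding cc_def by (rule rvec_submult) (use assms in auto)
    also have "\<dots> \<le> cc^2 * rvec a gm (h + k) * 2^m"
      by (rule mult_left_mono) (use assms(9) k rvec_ge1[of a gm "h+k"] in auto)
    finally have "rvec a gm h \<le> cc^2 * 2^m * rvec a gm (k + h)" by (simp add: algebra_simps)
    then have "rvec b gm h \<le> Q * rvec a gm (k + h)"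
      using rb w1 unfolding Q_def by (simp add: divide_right_mono order_trans field_simps)
    then have "sqrt (rvec b gm h) \<le> sqrt Q * sqrt (rvec a gm (k + h))"
      by (metis real_sqrt_le_mono real_sqrt_mult)
    then show ?thesis unfolding ak_def
      by (metis mult.assoc mult_right_mono norm_ge_zero)
  qed
  have "sqrt (rvec b gm h) * cmod (\<Sum>k\<in>K. phi_check N c x k * fourier_coeff g (k + h))
        \<le> sqrt (rvec b gm h) * (\<Sum>k\<in>K. mu * cmod (fourier_coeff g (k + h)))"
  proof (rule mult_left_mono)
    show "cmod (\<Sum>k\<in>K. phi_check N c x k * fourier_coeff g (k + h)) \<le> (\<Sum>k\<in>K. mu * cmod (fourier_coeff g (k + h)))"
      by (rule order_trans[OF norm_sum], rule sum_mono)
         (unfold norm_mult mu_def, rule mult_right_mono[OF phi_check_bound[OF assms(7)]], simp)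
  qed (use rvec_ge1[of b gm h] in simp)
  also have "\<dots> = mu * (\<Sum>k\<in>K. sqrt (rvec b gm h) * cmod (fourier_coeff g (k + h)))"
    by (simp add: sum_distrib_left algebra_simps)
  also have "\<dots> \<le> mu * (\<Sum>k\<in>K. sqrt Q * ak (k + h))"
    by (rule mult_left_mono, rule sum_mono) (use key mu0 in auto)
  also have "\<dots> = mu * sqrt Q * (\<Sum>k\<in>K. ak (k + h))"
    by (simp add: sum_distrib_left algebra_simps)
  also have "\<dots> \<le> mu * sqrt Q * A"
    unfolding A_eq[symmetric]
    by (rule mult_left_mono, rule sum_shift_le) (use aks ak0 assms(8) mu0 Q0 in auto)
  finally have ineq: "sqrt (rvec b gm h) * cmod (\<Sum>k\<in>K. phi_check N c x k * fourier_coeff g (k + h)) \<le> mu * sqrt Q * A" .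
  have lhs0: "0 \<le> sqrt (rvec b gm h) * cmod (\<Sum>k\<in>K. phi_check N c x k * fourier_coeff g (k + h))" using rvec_ge1[of b gm h] by simp
  have "(sqrt (rvec b gm h) * cmod (\<Sum>k\<in>K. phi_check N c x k * fourier_coeff g (k + h)))^2 \<le> (mu * sqrt Q * A)^2"
    by (rule power_mono[OF ineq lhs0])
  moreover have "(sqrt (rvec b gm h) * cmod (\<Sum>k\<in>K. phi_check N c x k * fourier_coeff g (k + h)))^2
      = rvec b gm h * (cmod (\<Sum>k\<in>K. phi_check N c x k * fourier_coeff g (k + h)))^2"
    using rvec_ge1[of b gm h] by (simp add: power_mult_distrib)
  moreover have "(mu * sqrt Q * A)^2 = (mu * cc * sqrt (2 ^ m) * A)^2 * inverse w"
    using Q0 w1 unfolding Q_def by (simp add: power_mult_distrib field_simps)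
  ultimately show ?thesis unfolding mu_def cc_def A_def w_def by simp
qed




lemma rvec_nonneg: "0 \<le> rvec b g k" using rvec_ge1[of b g k] by linarith

lemma rzeta_nonneg: "s > 1 \<Longrightarrow> rzeta s \<ge> 0"
  by (rule has_sum_nonneg[OF rzeta_has_sum]) auto

lemma H_prod:
  fixes g :: "real^'n::finite \<Rightarrow> complex"
  assumes "a > 0" "\<forall>j. 0 < gm j \<and> gm j \<le> 1" "2*b + 1 + 2*d = 2*a" "b \<ge> 0" "d > 0"
    and "in_A a gm g" "fourier_rep g" "N > 0" "finite K" "\<forall>k\<in>K. rvec a gm k \<le> 2 ^ m"
  shows "in_H b gm (\<lambda>y. g y * phiK K N c x y)"
    and "H_norm b gm (\<lambda>y. g y * phiK K N c x y)
          \<le> mu_bar N c * c_const a gm * sqrt (2 ^ m) * A_norm a gm g * zeta_const d CARD('n)"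
proof -
  define f where "f = (\<lambda>y. g y * phiK K N c x y)"
  define M0 where "M0 = (mu_bar N c * c_const a gm * sqrt (2 ^ m) * A_norm a gm g)^2"
  define Z where "Z = 1 + 2 * rzeta (1 + 2*d)"
  have Z0: "Z > 0" unfolding Z_def using rzeta_nonneg[of "1+2*d"] assms(5) by simp
  have M00: "M0 \<ge> 0" unfolding M0_def by simp
  have coef: "fourier_coeff f h = (\<Sum>k\<in>K. phi_check N c x k * fourier_coeff g (k + h))" for h
    unfolding f_def by (rule coeff_prod[OF assms(6)])
  have bnd: "rvec b gm h * (cmod (fourier_coeff f h))^2 \<le> M0 * inverse (wfun d h)" for h
    unfolding coef M0_def by (rule coef_bound) (use assms in auto)
  have hw: "((\<lambda>h::int^'n. inverse (wfun d h)) has_sum Z ^ CARD('n)) UNIV"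
    unfolding Z_def by (rule wfun_has_sum) (use assms in auto)
  have sw: "(\<lambda>h::int^'n. M0 * inverse (wfun d h)) summable_on UNIV"
    by (rule summable_on_cmult_right) (use hw in \<open>auto simp: summable_on_def\<close>)
  have sf: "(\<lambda>h. rvec b gm h * (cmod (fourier_coeff f h))^2) summable_on UNIV"
    by (rule summable_on_comparison_test[OF sw bnd]) (simp add: rvec_nonneg)
  have "infsum (\<lambda>h. rvec b gm h * (cmod (fourier_coeff f h))^2) UNIV \<le> infsum (\<lambda>h::int^'n. M0 * inverse (wfun d h)) UNIV"
    by (rule infsum_mono[OF sf sw bnd])
  also have "\<dots> = M0 * Z ^ CARD('n)"
    using hw by (simp add: infsum_cmult_right' infsumI)
  finally have inf_le: "infsum (\<lambda>h. rvec b gm h * (cmod (fourier_coeff f h))^2) UNIV \<le> M0 * Z ^ CARD('n)" .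
  have "H_norm b gm f \<le> sqrt (M0 * Z ^ CARD('n))"
    unfolding H_norm_def using inf_le by simp
  also have "\<dots> = sqrt M0 * sqrt (Z ^ CARD('n))" by (simp add: real_sqrt_mult)
  also have "sqrt M0 = mu_bar N c * c_const a gm * sqrt (2 ^ m) * A_norm a gm g"
  proof -
    have "mu_bar N c * c_const a gm * sqrt (2 ^ m) * A_norm a gm g \<ge> 0"
    proof -
      have "A_norm a gm g \<ge> 0" unfolding A_norm_def
        by (rule infsum_nonneg) (simp add: rvec_nonneg)
      moreover have "c_const a gm \<ge> 0" unfolding c_const_def by (simp add: prod_nonneg)
      ultimately show ?thesis using mu_bar_nonneg[of N c] by simp
    qed
    then show ?thesis unfolding M0_def by simp
  qed
  also have "sqrt (Z ^ CARD('n)) = zeta_const d CARD('n)"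
  proof -
    have "zeta_const d CARD('n) = (Z powr real CARD('n)) powr (1/2)"
      unfolding zeta_const_def Z_def[symmetric] by (simp add: powr_powr)
    also have "\<dots> = sqrt (Z ^ CARD('n))" using Z0 by (simp add: powr_realpow powr_half_sqrt)
    finally show ?thesis by simp
  qed
  finally show "H_norm b gm (\<lambda>y. g y * phiK K N c x y)
          \<le> mu_bar N c * c_const a gm * sqrt (2 ^ m) * A_norm a gm g * zeta_const d CARD('n)"
    unfolding f_def .
  have si: "set_integrable lborel unit_cube f" unfolding f_def by (rule prod_set_integrable[OF assms(6)])
  define Gb where "Gb = infsum (\<lambda>k. cmod (fourier_coeff g k)) UNIV"
  define Phi where "Phi = (\<Sum>k\<in>K. cmod (phi_check N c x k))"
  have fb: "cmod (f y) \<le> Gb * Phi" if "y \<in> unit_cube" for y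
    unfolding f_def norm_mult Gb_def Phi_def
    by (rule mult_mono[OF g_bound[OF assms(6,7) that] phiK_bound]) (auto simp: sum_nonneg infsum_nonneg)
  show "in_H b gm (\<lambda>y. g y * phiK K N c x y)"
    unfolding f_def[symmetric] in_H_def
    using set_integrable_meas[OF si] sq_set_integrable[OF si fb] sf by simp
qed

lemma wce_apply:
  fixes f :: "real^'n::finite \<Rightarrow> complex"
  assumes "in_H b gm f" "fourier_rep f" "H_norm b gm f \<le> B" "wce b gm z L \<le> ereal W"
  shows "cmod ((LINT y:unit_cube|lborel. f y) - (1 / of_nat L) * (\<Sum>l<L. f (z l))) \<le> B * W"
proof -
  define E where "E = cmod ((LINT y:unit_cube|lborel. f y) - (1 / of_nat L) * (\<Sum>l<L. f (z l)))"
  have H0: "H_norm b gm f \<ge> 0" unfolding H_norm_def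
    by (simp add: infsum_nonneg rvec_nonneg)
  have step: "E \<le> t * W" if t: "t > 0" "H_norm b gm f \<le> t" for t
  proof -
    define s where "s = 1 / t"
    have s0: "s > 0" unfolding s_def using t by simp
    define f' where "f' = (\<lambda>y. complex_of_real s * f y)"
    have cf: "fourier_coeff f' k = complex_of_real s * fourier_coeff f k" for k
      unfolding fourier_coeff_def f'_def by (simp add: mult.assoc)
    have hm: "set_borel_measurable lborel unit_cube f" and hi: "set_integrable lborel unit_cube (\<lambda>x. (cmod (f x))^2)"
      and hs: "(\<lambda>k. rvec b gm k * (cmod (fourier_coeff f k))^2) summable_on UNIV"
      using assms(1) unfolding in_H_def by auto
    have "in_H b gm f'"
      unfolding in_H_def
    proof (intro conjI)
      have eq: "(\<lambda>x. indicator unit_cube x *\<^sub>R f' x) = (\<lambda>x. complex_of_real s * (indicator unit_cube x *\<^sub>R f x))"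
        unfolding f'_def by (simp add: fun_eq_iff)
      have "(\<lambda>x. complex_of_real s * (indicator unit_cube x *\<^sub>R f x)) \<in> borel_measurable lborel"
        using borel_measurable_times[OF borel_measurable_const[of "complex_of_real s"] hm[unfolded set_borel_measurable_def]] .
      then show "set_borel_measurable lborel unit_cube f'"
        unfolding set_borel_measurable_def eq .
      have "(\<lambda>x. (cmod (f' x))^2) = (\<lambda>x. s^2 * (cmod (f x))^2)"
        unfolding f'_def using s0 by (simp add: norm_mult power_mult_distrib fun_eq_iff)
      then show "set_integrable lborel unit_cube (\<lambda>x. (cmod (f' x))^2)" using hi by simp
      have "(\<lambda>k. rvec b gm k * (cmod (fourier_coeff f' k))^2) = (\<lambda>k. s^2 * (rvec b gm k * (cmod (fourier_coeff f k))^2))"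
        unfolding cf using s0 by (simp add: norm_mult power_mult_distrib fun_eq_iff)
      then show "(\<lambda>k. rvec b gm k * (cmod (fourier_coeff f' k))^2) summable_on UNIV"
        using summable_on_cmult_right[OF hs] by simp
    qed
    moreover have "fourier_rep f'"
      unfolding fourier_rep_def
    proof
      fix y :: "real^'n" assume "y \<in> unit_cube"
      then have "f y = (\<Sum>\<^sub>\<infinity>k. fourier_coeff f k * omega k y)" using assms(2) unfolding fourier_rep_def by blast
      then show "f' y = (\<Sum>\<^sub>\<infinity>k. fourier_coeff f' k * omega k y)"
        unfolding cf unfolding f'_def by (simp add: infsum_cmult_right' mult.assoc)
    qed
    moreover have Hf': "H_norm b gm f' = s * H_norm b gm f"
    proof -
      have "(\<lambda>k. rvec b gm k * (cmod (fourier_coeff f' k))^2) = (\<lambda>k. s^2 * (rvec b gm k * (cmod (fourier_coeff f k))^2))"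
        unfolding cf using s0 by (simp add: norm_mult power_mult_distrib fun_eq_iff)
      then show ?thesis unfolding H_norm_def using s0 by (simp add: infsum_cmult_right' real_sqrt_mult)
    qed
    moreover have "s * H_norm b gm f \<le> 1" unfolding s_def using t by (simp add: field_simps)
    ultimately have mem: "f' \<in> {f. in_H b gm f \<and> fourier_rep f \<and> H_norm b gm f \<le> 1}" by simp
    have "ereal (cmod ((LINT y:unit_cube|lborel. f' y) - (1 / of_nat L) * (\<Sum>l<L. f' (z l)))) \<le> wce b gm z L"
      unfolding wce_def by (rule SUP_upper[OF mem])
    also have "\<dots> \<le> ereal W" by (rule assms(4))
    finally have le1: "cmod ((LINT y:unit_cube|lborel. f' y) - (1 / of_nat L) * (\<Sum>l<L. f' (z l))) \<le> W" by simp
    have "(LINT y:unit_cube|lborel. f' y) - (1 / of_nat L) * (\<Sum>l<L. f' (z l))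
        = complex_of_real s * ((LINT y:unit_cube|lborel. f y) - (1 / of_nat L) * (\<Sum>l<L. f (z l)))"
      unfolding f'_def by (simp add: sum_distrib_left algebra_simps)
    then have "s * E \<le> W" using le1 s0 unfolding E_def by (simp add: norm_mult)
    then show "E \<le> t * W" unfolding s_def using t by (simp add: field_simps)
  qed
  have W0: "W \<ge> 0"
  proof -
    have "0 \<le> E" unfolding E_def by simp
    also have "E \<le> (H_norm b gm f + 1) * W" by (rule step) (use H0 in auto)
    finally show ?thesis using H0 by (simp add: zero_le_mult_iff)
  qed
  show ?thesis unfolding E_def[symmetric]
  proof (rule field_le_epsilon)
    fix e :: real assume e: "e > 0"
    have ew: "e / (W + 1) > 0" using e W0 by simp
    have "E \<le> (B + e / (W + 1)) * W" by (rule step) (use assms(3) H0 ew in linarith)+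
    also have "\<dots> = B * W + e * (W / (W + 1))" using W0 by (simp add: field_simps)
    also have "\<dots> \<le> B * W + e" using W0 e by (simp add: field_simps)
    finally show "E \<le> B * W + e" .
  qed
qed




theorem theorem3p20:
  fixes \<alpha> \<delta> \<tau> :: real
    and \<gamma> :: "'n::{finite,linorder} \<Rightarrow> real"
    and g :: "real^'n::{finite,linorder} \<Rightarrow> complex"
    and N :: nat and x :: "nat \<Rightarrow> real^'n::{finite,linorder}" and c :: "nat \<Rightarrow> real"
    and L :: nat and gen :: "nat^'n::{finite,linorder}" and m :: nat
  assumes "\<alpha> > 1" and "0 < \<delta>" and "\<delta> < \<alpha> - 1"
    and "0 < \<tau>" and "\<tau> \<le> \<alpha> - 1 - \<delta>"
    and "\<forall>j. \<gamma> j \<le> 1" and "\<forall>i j. i \<le> j \<longrightarrow> \<gamma> j \<le> \<gamma> i" and "\<forall>j. 0 < \<gamma> j"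
    and "in_A \<alpha> \<gamma> g" and "fourier_rep g"
    and "N > 0" and "\<forall>n\<in>{1..N}. x n \<in> unit_cube"
    and "prime L" and "\<forall>j. 1 \<le> gen $ j \<and> gen $ j \<le> L - 1"
    and "\<forall>\<tau>'. 0 < \<tau>' \<and> \<tau>' \<le> (\<alpha> - 1/2 - \<delta>) - 1/2 \<longrightarrow>
           wce (\<alpha> - 1/2 - \<delta>) \<gamma> (lattice_pt L gen) L
             \<le> ereal (Ccon \<gamma> (\<alpha> - 1/2 - \<delta>) \<tau>' * real L powr (- (\<alpha> - 1/2 - \<delta>) + \<tau>'))"
    and "m \<ge> 1"
  shows "cmod ((1 / of_nat N) * (\<Sum>n=1..N. complex_of_real (c n) * g (x n))
            - (1 / of_nat L) * (\<Sum>l<L. g (lattice_pt L gen l) * phiK (hypcross \<alpha> \<gamma> m) N c x (lattice_pt L gen l)))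
          \<le> err1 g (hypcross \<alpha> \<gamma> m) N c x + err2 g (hypcross \<alpha> \<gamma> m) N c x (lattice_pt L gen) L
       \<and> err1 g (hypcross \<alpha> \<gamma> m) N c x + err2 g (hypcross \<alpha> \<gamma> m) N c x (lattice_pt L gen) L
          \<le> A_norm \<alpha> \<gamma> g *
             (1 / sqrt (2 powr (real m - real CARD('n::{finite,linorder}) + 1))
              + sqrt (2 ^ m) / real L powr (\<alpha> - 1/2 - \<delta> - \<tau>)
                * c_const \<alpha> \<gamma> * zeta_const \<delta> CARD('n::{finite,linorder}) * Ccon \<gamma> (\<alpha> - 1/2 - \<delta>) \<tau>)
             * mu_bar N c"
  proof -
  define K where "K = hypcross \<alpha> \<gamma> m"
  define b where "b = \<alpha> - 1/2 - \<delta>"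
  define S where "S = (1 / of_nat N) * (\<Sum>n=1..N. complex_of_real (c n) * g (x n))"
  define I where "I = (LINT y : unit_cube | lborel. g y * phiK K N c x y)"
  define Q where "Q = (1 / of_nat L) * (\<Sum>l<L. g (lattice_pt L gen l) * phiK K N c x (lattice_pt L gen l))"
  define mu where "mu = mu_bar N c"
  define A where "A = A_norm \<alpha> \<gamma> g"
  define cc where "cc = c_const \<alpha> \<gamma>"
  define Z where "Z = zeta_const \<delta> CARD('n)"
  define Cc where "Cc = Ccon \<gamma> b \<tau>"
  define P :: real where "P = 2 powr (real m - real CARD('n) + 1)"
  have gam: "\<forall>j. 0 < \<gamma> j \<and> \<gamma> j \<le> 1" using assms by auto
  have finK: "finite K" unfolding K_def by (rule hypcross_finite) (use assms gam in auto)
  have Kle: "\<forall>k\<in>K. rvec \<alpha> \<gamma> k \<le> 2 ^ m" unfolding K_def using hypcross_rvec_le by blast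
  have e1def: "err1 g K N c x = cmod (S - I)" unfolding err1_def S_def I_def by simp
  have e2def: "err2 g K N c x (lattice_pt L gen) L = cmod (I - Q)" unfolding err2_def I_def Q_def by simp
  have part1: "cmod (S - Q) \<le> cmod (S - I) + cmod (I - Q)"
  proof -
    have "S - Q = (S - I) + (I - Q)" by simp
    then show ?thesis by (metis norm_triangle_ineq)
  qed
  have e1: "err1 g K N c x \<le> A / sqrt P * mu"
    unfolding K_def A_def P_def mu_def by (rule err1_bound) (use assms gam in auto)
  have lin: "2*b + 1 + 2*\<delta> = 2*\<alpha>" unfolding b_def by simp
  have b0: "b \<ge> 0" unfolding b_def using assms by simp
  have inH: "in_H b \<gamma> (\<lambda>y. g y * phiK K N c x y)"
    by (rule H_prod(1)[OF _ gam lin b0]) (use assms finK Kle in auto)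
  have Hle: "H_norm b \<gamma> (\<lambda>y. g y * phiK K N c x y) \<le> mu * cc * sqrt (2 ^ m) * A * Z"
    unfolding mu_def cc_def A_def Z_def
    by (rule H_prod(2)[OF _ gam lin b0]) (use assms finK Kle in auto)
  have rep: "fourier_rep (\<lambda>y. g y * phiK K N c x y)"
    by (rule rep_prod[OF _ _ finK]) (use assms in auto)
  have wle: "wce b \<gamma> (lattice_pt L gen) L \<le> ereal (Cc * real L powr (- b + \<tau>))"
    unfolding Cc_def b_def using assms by auto
  have e2: "err2 g K N c x (lattice_pt L gen) L \<le> (mu * cc * sqrt (2 ^ m) * A * Z) * (Cc * real L powr (- b + \<tau>))"
    unfolding err2_def by (rule wce_apply[OF inH rep Hle wle])
  have Lpos: "real L > 0" using prime_gt_0_nat[OF assms(13)] by simp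
  have pw: "real L powr (- b + \<tau>) = 1 / real L powr (\<alpha> - 1/2 - \<delta> - \<tau>)"
  proof -
    have h: "- b + \<tau> = - (\<alpha> - 1/2 - \<delta> - \<tau>)" unfolding b_def by simp
    show ?thesis unfolding h by (rule powr_minus_divide)
  qed
  have "err1 g K N c x + err2 g K N c x (lattice_pt L gen) L
        \<le> A / sqrt P * mu + (mu * cc * sqrt (2 ^ m) * A * Z) * (Cc * real L powr (- b + \<tau>))"
    using e1 e2 by linarith
  also have "\<dots> = A * (1 / sqrt P + sqrt (2 ^ m) / real L powr (\<alpha> - 1/2 - \<delta> - \<tau>) * cc * Z * Cc) * mu"
    unfolding pw by (simp add: algebra_simps)
  finally have part2: "err1 g K N c x + err2 g K N c x (lattice_pt L gen) L
      \<le> A * (1 / sqrt P + sqrt (2 ^ m) / real L powr (\<alpha> - 1/2 - \<delta> - \<tau>) * cc * Z * Cc) * mu" .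
  show ?thesis
    using part1 part2 unfolding e1def[symmetric] e2def[symmetric]
    unfolding K_def S_def Q_def A_def P_def cc_def Z_def Cc_def b_def mu_def by simp
qed


end
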